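(* Let $K\ge2$, $n\ge1$, and let $\pi$ be a probability distribution on $[K]^n$. Then for all $c\neq c'$ in $[K]^n$ with $\pi(c)>0$, \[ P_{\mathrm{R}}(c,c')\;\ge\;\frac{1}{2(K-1)}\,P_{\mathrm{MG}}(c,c'). \]
   Context: Notation: $[K]=\{1,\dots,K\}$; $n_k(c)=\#\{i:c_i=k\}$; $c_{-i}$ is $c$ without its $i$-th entry, $(c_{-i},k)$ is $c$ with $c_i$ replaced by $k$; $\pi(c_i=k\mid c_{-i})=\pi((c_{-i},k))/\sum_{j}\pi((c_{-i},j))$. $\mathcal{K}=\{(k,k')\in[K]^2:k<k'\}$, $p_c(k,k')=\frac{n_k(c)+n_{k'}(c)}{(K-1)n}$. $r(c,i,k_-,k_+)=\frac{n_{k_-}(c)}{n_{k_+}(c)+1}\cdot\frac{\pi(c_i=k_+\mid c_{-i})}{\pi(c_i=k_-\mid c_{-i})}$. $P_{\mathrm{MG}}(c,c')=\frac1n\sum_{i=1}^n\mathbb 1(c'_{-i}=c_{-i})\pi(c_i=c'_i\mid c_{-i})$ (random-scan Gibbs sampler). $P_{\mathrm{R}}$: from $c$, sample $(k,k')\sim p_c$; set $(k_-,k_+)=(k,k')$ or $(k',k)$ with probability $1/2$ each; if $n_{k_-}(c)=0$ stay at $c$; otherwise pick $i$ uniformly from $\{i':c_{i'}=k_-\}$ and move to $(c_{-i},k_+)$ with probability $\min\{1,r(c,i,k_-,k_+)\}$, else stay at $c$. *)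

theory Defs
  imports "HOL-Library.FuncSet" Complex_Main
begin

definition configs :: "nat \<Rightarrow> nat \<Rightarrow> (nat \<Rightarrow> nat) set" where
  "configs K n = PiE {1..n} (\<lambda>_. {1..K})"

definition is_distribution :: "nat \<Rightarrow> nat \<Rightarrow> ((nat \<Rightarrow> nat) \<Rightarrow> real) \<Rightarrow> bool" where
  "is_distribution K n \<pi> \<longleftrightarrow>
     (\<forall>c\<in>configs K n. \<pi> c \<ge> 0) \<and> (\<Sum>c\<in>configs K n. \<pi> c) = 1"

definition cnt :: "nat \<Rightarrow> (nat \<Rightarrow> nat) \<Rightarrow> nat \<Rightarrow> nat" where
  "cnt n c k = card {i\<in>{1..n}. c i = k}"

definition cond_prob :: "nat \<Rightarrow> ((nat \<Rightarrow> nat) \<Rightarrow> real) \<Rightarrow> (nat \<Rightarrow> nat) \<Rightarrow> nat \<Rightarrow> nat \<Rightarrow> real" where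
  "cond_prob K \<pi> c i k = \<pi> (c(i := k)) / (\<Sum>j\<in>{1..K}. \<pi> (c(i := j)))"

definition P_MG :: "nat \<Rightarrow> nat \<Rightarrow> ((nat \<Rightarrow> nat) \<Rightarrow> real) \<Rightarrow> (nat \<Rightarrow> nat) \<Rightarrow> (nat \<Rightarrow> nat) \<Rightarrow> real" where
  "P_MG K n \<pi> c c' = (1 / real n) *
     (\<Sum>i\<in>{1..n}. (if (\<forall>j\<in>{1..n}. j \<noteq> i \<longrightarrow> c' j = c j) then cond_prob K \<pi> c i (c' i) else 0))"

definition p_pair :: "nat \<Rightarrow> nat \<Rightarrow> (nat \<Rightarrow> nat) \<Rightarrow> nat \<Rightarrow> nat \<Rightarrow> real" where
  "p_pair K n c k k' = (real (cnt n c k) + real (cnt n c k')) / (real (K - 1) * real n)"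

definition ratio :: "nat \<Rightarrow> nat \<Rightarrow> ((nat \<Rightarrow> nat) \<Rightarrow> real) \<Rightarrow> (nat \<Rightarrow> nat) \<Rightarrow> nat \<Rightarrow> nat \<Rightarrow> nat \<Rightarrow> real" where
  "ratio K n \<pi> c i km kp =
     real (cnt n c km) / (real (cnt n c kp) + 1) * (cond_prob K \<pi> c i kp / cond_prob K \<pi> c i km)"

definition move_prob :: "nat \<Rightarrow> nat \<Rightarrow> ((nat \<Rightarrow> nat) \<Rightarrow> real) \<Rightarrow> (nat \<Rightarrow> nat) \<Rightarrow> (nat \<Rightarrow> nat) \<Rightarrow> nat \<Rightarrow> nat \<Rightarrow> real" where
  "move_prob K n \<pi> c c' km kp =
     (if cnt n c km = 0 then (if c' = c then 1 else 0)
      else (1 / real (cnt n c km)) *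
        (\<Sum>i\<in>{i\<in>{1..n}. c i = km}.
            min 1 (ratio K n \<pi> c i km kp) * (if c' = c(i := kp) then 1 else 0)
          + (1 - min 1 (ratio K n \<pi> c i km kp)) * (if c' = c then 1 else 0)))"

definition P_R :: "nat \<Rightarrow> nat \<Rightarrow> ((nat \<Rightarrow> nat) \<Rightarrow> real) \<Rightarrow> (nat \<Rightarrow> nat) \<Rightarrow> (nat \<Rightarrow> nat) \<Rightarrow> real" where
  "P_R K n \<pi> c c' =
     (\<Sum>(k, k')\<in>{(k, k'). k \<in> {1..K} \<and> k' \<in> {1..K} \<and> k < k'}.
        p_pair K n c k k' *
        ((1/2) * move_prob K n \<pi> c c' k k' + (1/2) * move_prob K n \<pi> c c' k' k))"

end

theory Submission
  imports Defs
begin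

lemma cfg_upd:
  assumes "c \<in> configs K n" "i \<in> {1..n}" "j \<in> {1..K}"
  shows "c(i := j) \<in> configs K n"
  using assms unfolding configs_def by (auto simp: PiE_def extensional_def Pi_def)

lemma cond_nonneg:
  assumes "is_distribution K n \<pi>" "c \<in> configs K n" "i \<in> {1..n}" "k \<in> {1..K}"
  shows "cond_prob K \<pi> c i k \<ge> 0"
proof -
  have "\<forall>j\<in>{1..K}. \<pi> (c(i:=j)) \<ge> 0"
    using assms cfg_upd unfolding is_distribution_def by blast
  then have "(\<Sum>j\<in>{1..K}. \<pi> (c(i := j))) \<ge> 0" "\<pi> (c(i:=k)) \<ge> 0"
    using assms(4) by (auto intro: sum_nonneg)
  then show ?thesis unfolding cond_prob_def
    by (rule divide_nonneg_nonneg[rotated])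
qed

lemma cond_le1:
  assumes "is_distribution K n \<pi>" "c \<in> configs K n" "i \<in> {1..n}" "k \<in> {1..K}"
  shows "cond_prob K \<pi> c i k \<le> 1"
proof -
  have nn: "\<forall>j\<in>{1..K}. \<pi> (c(i:=j)) \<ge> 0"
    using assms cfg_upd unfolding is_distribution_def by blast
  have le: "\<pi> (c(i:=k)) \<le> (\<Sum>j\<in>{1..K}. \<pi> (c(i := j)))"
    by (rule member_le_sum) (use nn assms(4) in auto)
  show ?thesis
  proof (cases "(\<Sum>j\<in>{1..K}. \<pi> (c(i := j))) = 0")
    case True then show ?thesis by (simp add: cond_prob_def)
  next
    case False
    have "(\<Sum>j\<in>{1..K}. \<pi> (c(i := j))) \<ge> 0" using nn by (auto intro: sum_nonneg)
    with False le show ?thesis unfolding cond_prob_def by (simp add: divide_le_eq_1)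
  qed
qed

lemma ratio_nonneg:
  assumes "is_distribution K n \<pi>" "c \<in> configs K n" "i \<in> {1..n}" "km \<in> {1..K}" "kp \<in> {1..K}"
  shows "ratio K n \<pi> c i km kp \<ge> 0"
  unfolding ratio_def using cond_nonneg[OF assms(1-3,4)] cond_nonneg[OF assms(1-3,5)]
  by (intro mult_nonneg_nonneg divide_nonneg_nonneg) auto

lemma move_nonneg:
  assumes "is_distribution K n \<pi>" "c \<in> configs K n" "c' \<noteq> c" "km \<in> {1..K}" "kp \<in> {1..K}"
  shows "move_prob K n \<pi> c c' km kp \<ge> 0"
proof -
  have "\<forall>i\<in>{i\<in>{1..n}. c i = km}. min 1 (ratio K n \<pi> c i km kp) \<ge> 0"
    using ratio_nonneg[OF assms(1,2) _ assms(4,5)] by auto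
  then have "0 \<le> (\<Sum>i\<in>{i\<in>{1..n}. c i = km}.
            min 1 (ratio K n \<pi> c i km kp) * (if c' = c(i := kp) then 1 else 0)
          + (1 - min 1 (ratio K n \<pi> c i km kp)) * (if c' = c then 1 else 0))"
    using assms(3) by (intro sum_nonneg) auto
  then show ?thesis unfolding move_prob_def using assms(3) by simp
qed

theorem mainTheorem2:
  fixes K n :: nat and \<pi> :: "(nat \<Rightarrow> nat) \<Rightarrow> real" and c c' :: "nat \<Rightarrow> nat"
  assumes "K \<ge> 2" and "n \<ge> 1"
    and "is_distribution K n \<pi>"
    and "c \<in> configs K n" and "c' \<in> configs K n" and "c \<noteq> c'"
    and "\<pi> c > 0"
  shows "P_R K n \<pi> c c' \<ge> 1 / (2 * real (K - 1)) * P_MG K n \<pi> c c'"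
proof -
  note D = assms(3)
  have cne: "c' \<noteq> c" using assms(6) by auto
  define S where "S = {(k, k'). k \<in> {1..K} \<and> k' \<in> {1..K} \<and> k < k'}"
  have finS: "finite S" 
    by (rule finite_subset[of _ "{1..K} \<times> {1..K}"]) (auto simp: S_def)
  define T where "T = (\<lambda>(k, k'). p_pair K n c k k' *
        ((1/2) * move_prob K n \<pi> c c' k k' + (1/2) * move_prob K n \<pi> c c' k' k))"
  have Tnn: "\<forall>x\<in>S. T x \<ge> 0"
    using move_nonneg[OF D assms(4) cne]
    by (auto simp: S_def T_def p_pair_def intro!: mult_nonneg_nonneg add_nonneg_nonneg)
  have PR: "P_R K n \<pi> c c' = sum T S" unfolding P_R_def S_def T_def by simp
  have PRnn: "P_R K n \<pi> c c' \<ge> 0" unfolding PR using Tnn by (simp add: sum_nonneg)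
  show ?thesis
  proof (cases "\<exists>i0\<in>{1..n}. \<forall>j\<in>{1..n}. j \<noteq> i0 \<longrightarrow> c' j = c j")
    case False
    then have "P_MG K n \<pi> c c' = 0" unfolding P_MG_def
      by (intro mult_eq_0_iff[THEN iffD2] disjI2 sum.neutral) auto
    then show ?thesis using PRnn by simp
  next
    case True
    then obtain i0 where i0: "i0 \<in> {1..n}" and agree: "\<forall>j\<in>{1..n}. j \<noteq> i0 \<longrightarrow> c' j = c j"
      by blast
    define a where "a = c i0"
    define b where "b = c' i0"
    have aK: "a \<in> {1..K}" using assms(4) i0 unfolding a_def configs_def by auto
    have bK: "b \<in> {1..K}" using assms(5) i0 unfolding b_def configs_def by auto
    have c'eq: "c' = c(i0 := b)"
    proof
      fix j show "c' j = (c(i0 := b)) j"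
      proof (cases "j \<in> {1..n}")
        case True then show ?thesis using agree b_def by auto
      next
        case False then show ?thesis using assms(4,5) i0 unfolding configs_def
          by (auto simp: PiE_def extensional_def)
      qed
    qed
    have ab: "a \<noteq> b" using cne c'eq a_def by auto
    have PMG: "P_MG K n \<pi> c c' = (1 / real n) * cond_prob K \<pi> c i0 b"
    proof -
      have "(\<Sum>i\<in>{1..n}. (if (\<forall>j\<in>{1..n}. j \<noteq> i \<longrightarrow> c' j = c j) then cond_prob K \<pi> c i (c' i) else 0))
          = (\<Sum>i\<in>{1..n}. (if i = i0 then cond_prob K \<pi> c i0 b else 0))"
      proof (rule sum.cong)
        fix i assume i: "i \<in> {1..n}"
        show "(if (\<forall>j\<in>{1..n}. j \<noteq> i \<longrightarrow> c' j = c j) then cond_prob K \<pi> c i (c' i) else 0)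
            = (if i = i0 then cond_prob K \<pi> c i0 b else 0)"
        proof (cases "i = i0")
          case True then show ?thesis using agree b_def by auto
        next
          case False
          have nc: "\<not> (\<forall>j\<in>{1..n}. j \<noteq> i \<longrightarrow> c' j = c j)"
          proof
            assume "\<forall>j\<in>{1..n}. j \<noteq> i \<longrightarrow> c' j = c j"
            then have "c' i0 = c i0" using i0 False by auto
            then show False using ab a_def b_def by simp
          qed
          show ?thesis by (subst if_not_P[OF nc]) (simp add: False)
        qed
      qed simp
      also have "\<dots> = cond_prob K \<pi> c i0 b" using i0 by simp
      finally show ?thesis unfolding P_MG_def by simp
    qed
    define na where "na = cnt n c a"
    define nb where "nb = cnt n c b"
    define qa where "qa = cond_prob K \<pi> c i0 a"
    define qb where "qb = cond_prob K \<pi> c i0 b"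
    define m where "m = min 1 (ratio K n \<pi> c i0 a b)"
    have na1: "na \<ge> 1"
    proof -
      have "i0 \<in> {i\<in>{1..n}. c i = a}" using i0 a_def by auto
      moreover have "finite {i\<in>{1..n}. c i = a}" by auto
      ultimately have "card {i\<in>{1..n}. c i = a} \<noteq> 0" by (metis card_0_eq empty_iff)
      then show ?thesis unfolding na_def cnt_def by (simp only: not_less_eq_eq[symmetric])
    qed
    have m_eq: "m = min 1 (real na / (real nb + 1) * (qb / qa))"
      unfolding m_def ratio_def na_def nb_def qa_def qb_def by simp
    have qb01: "0 \<le> qb" "qb \<le> 1"
      using cond_nonneg[OF D assms(4) i0 bK] cond_le1[OF D assms(4) i0 bK] qb_def by auto
    have qa01: "0 < qa" "qa \<le> 1"
    proof -
      have "c(i0 := a) = c" using a_def by auto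
      have nn: "\<forall>j\<in>{1..K}. \<pi> (c(i0:=j)) \<ge> 0"
        using D assms(4) cfg_upd i0 unfolding is_distribution_def by blast
      have le: "\<pi> (c(i0:=a)) \<le> (\<Sum>j\<in>{1..K}. \<pi> (c(i0 := j)))"
        by (rule member_le_sum) (use nn aK in auto)
      then show "0 < qa" unfolding qa_def cond_prob_def using \<open>c(i0 := a) = c\<close> assms(7) by simp
      show "qa \<le> 1" using cond_le1[OF D assms(4) i0 aK] qa_def by simp
    qed
    have mv: "move_prob K n \<pi> c c' a b \<ge> (1 / real na) * m"
    proof -
      have "cnt n c a \<noteq> 0" using na1 na_def by simp
      then have mpe: "move_prob K n \<pi> c c' a b = (1 / real na) *
        (\<Sum>i\<in>{i\<in>{1..n}. c i = a}.
            min 1 (ratio K n \<pi> c i a b) * (if c' = c(i := b) then 1 else 0)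
          + (1 - min 1 (ratio K n \<pi> c i a b)) * (if c' = c then 1 else 0))"
        unfolding move_prob_def na_def by simp
      have "m \<le> (\<Sum>i\<in>{i\<in>{1..n}. c i = a}.
            min 1 (ratio K n \<pi> c i a b) * (if c' = c(i := b) then 1 else 0)
          + (1 - min 1 (ratio K n \<pi> c i a b)) * (if c' = c then 1 else 0))"
      proof -
        have "m = min 1 (ratio K n \<pi> c i0 a b) * (if c' = c(i0 := b) then 1 else 0)
          + (1 - min 1 (ratio K n \<pi> c i0 a b)) * (if c' = c then 1 else 0)"
          using c'eq cne m_def by simp
        also have "\<dots> \<le> (\<Sum>i\<in>{i\<in>{1..n}. c i = a}.
            min 1 (ratio K n \<pi> c i a b) * (if c' = c(i := b) then 1 else 0)
          + (1 - min 1 (ratio K n \<pi> c i a b)) * (if c' = c then 1 else 0))"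
          by (rule member_le_sum)
            (use i0 a_def cne ratio_nonneg[OF D assms(4) _ aK bK] in auto)
        finally show ?thesis .
      qed
      moreover have "0 \<le> 1 / real na" by simp
      ultimately show ?thesis unfolding mpe by (rule mult_left_mono)
    qed
    have key: "(real na + real nb) / real na * m \<ge> qb"
    proof (cases "real na / (real nb + 1) * (qb / qa) \<ge> 1")
      case True
      then have "m = 1" using m_eq by simp
      moreover have "(real na + real nb) / real na \<ge> 1" using na1 by simp
      ultimately show ?thesis using qb01 by simp
    next
      case False
      then have "m = real na / (real nb + 1) * (qb / qa)" using m_eq by simp
      moreover have "\<And>A B x N::real. N \<noteq> 0 \<Longrightarrow> A / N * (N / B * x) = A / B * x"
        by simp
      ultimately have "(real na + real nb) / real na * m = (real na + real nb) / (real nb + 1) * (qb / qa)"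
        using na1 by simp
      then have "(real na + real nb) / real na * m = (real na + real nb) / (real nb + 1) * qb / qa"
        by simp
      moreover have qn: "qa * real nb \<le> real nb"
        using qa01 by (simp add: mult_left_le_one_le)
      moreover have "(real na + real nb) / (real nb + 1) \<ge> qa"
        using na1 qa01 qn by (simp add: field_simps)
      ultimately have eqm: "(real na + real nb) / real na * m = (real na + real nb) / (real nb + 1) * qb / qa"
        and ge: "(real na + real nb) / (real nb + 1) \<ge> qa" by blast+
      have "qa * qb / qa \<le> (real na + real nb) / (real nb + 1) * qb / qa"
        by (intro divide_right_mono mult_right_mono ge) (use qa01 qb01 in auto)
      moreover have "qa * qb / qa = qb" using qa01 by simp
      ultimately show ?thesis using eqm by simp
    qed
    define pr where "pr = (min a b, max a b)"
    have prS: "pr \<in> S" using aK bK ab unfolding pr_def S_def by auto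
    have Tpr: "T pr \<ge> (real na + real nb) / (real (K - 1) * real n) * ((1/2) * ((1 / real na) * m))"
    proof -
      have pp: "p_pair K n c (min a b) (max a b) = (real na + real nb) / (real (K - 1) * real n)"
        unfolding p_pair_def na_def nb_def by (cases "a < b") (auto simp: min_def max_def)
      have ppn: "p_pair K n c (min a b) (max a b) \<ge> 0" unfolding p_pair_def by simp
      have h: "(1/2) * move_prob K n \<pi> c c' (min a b) (max a b) + (1/2) * move_prob K n \<pi> c c' (max a b) (min a b)
          \<ge> (1/2) * ((1 / real na) * m)"
      proof (cases "a < b")
        case True
        then show ?thesis using mv move_nonneg[OF D assms(4) cne bK aK] by (simp add: min_def max_def)
      next
        case False
        then show ?thesis using mv move_nonneg[OF D assms(4) cne bK aK] ab by (simp add: min_def max_def)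
      qed
      show ?thesis unfolding T_def pr_def using mult_left_mono[OF h ppn] pp by simp
    qed
    have "T pr \<le> sum T S"
      by (rule member_le_sum) (use prS Tnn finS in auto)
    then have PRge: "P_R K n \<pi> c c' \<ge> (real na + real nb) / (real (K - 1) * real n) * ((1/2) * ((1 / real na) * m))"
      using Tpr PR by simp
    have K1: "real (K - 1) > 0" using assms(1) by simp
    have n1: "real n > 0" using assms(2) by simp
    have "(real na + real nb) / (real (K - 1) * real n) * ((1/2) * ((1 / real na) * m))
        = ((real na + real nb) / real na * m) / (2 * real (K - 1) * real n)"
      using na1 by (simp add: field_simps)
    also have "\<dots> \<ge> qb / (2 * real (K - 1) * real n)"
      using key K1 n1 by (intro divide_right_mono) auto
    finally have "qb / (2 * real (K - 1) * real n) \<le> P_R K n \<pi> c c'" using PRge by (rule order_trans)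
    moreover have "1 / (2 * real (K - 1)) * P_MG K n \<pi> c c' = qb / (2 * real (K - 1) * real n)"
      using PMG qb_def by simp
    ultimately show ?thesis by simp
  qed
qed

end
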